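(* Let $G$ be a graph on $[n]$ and let $e$ and $f$ be two crossing edges of $G$. Then $e$ and $f$ are crossing closed if and only if the join $e\vee f$ exists in $NC_G$. When $e$ and $f$ are crossing closed, $e\vee f$ is the bond whose edge set is $E(J(e,f))$, and $J(e,f)$ is the unique non-trivial connected component of $e\vee f$. Furthermore, $G$ is crossing closed if and only if $e\vee f$ exists in $NC_G$ for every pair of crossing edges $e,f$ of $G$.
   Context: All graphs are finite simple graphs with vertex set $[n]=\{1,\dots,n\}$; edges are written $ij$ with $i<j$. Two edges $a_1a_2$ and $b_1b_2$ cross if $a_1<b_1<a_2<b_2$ or $b_1<a_1<b_2<a_2$. A spanning subgraph is identified with its edge set. A bond of $G$ is a spanning subgraph of $G$ each of whose connected components is an induced subgraph of $G$. For a bond $H$, $\pi(H)$ is the set partition of $[n]$ whose blocks are the vertex sets of the connected components of $H$. A set partition is crossing if there are distinct blocks $B,B'$ and $a,c\in B$, $b,d\in B'$ with $a<b<c<d$, and noncrossing otherwise; a bond $H$ is noncrossing if $\pi(H)$ is noncrossing. $NC_G$ is the poset of noncrossing bonds of $G$ ordered by inclusion of edge sets. For an edge $e$, $e$ also denotes the bond with edge set $\{e\}$ (an element of $NC_G$). Two crossing edges $e,f$ are crossing closed if among all induced connected subgraphs of $G$ containing both $e$ and $f$ there is a unique one minimal with respect to containment, denoted $J(e,f)$; $G$ is crossing closed if every pair of crossing edges of $G$ is crossing closed. *)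

theory Defs
  imports Main
begin

definition graph_on :: "nat \<Rightarrow> (nat \<times> nat) set \<Rightarrow> bool" where
  "graph_on n E \<longleftrightarrow> E \<subseteq> {(i,j). 1 \<le> i \<and> i < j \<and> j \<le> n}"

definition crosses :: "nat \<times> nat \<Rightarrow> nat \<times> nat \<Rightarrow> bool" where
  "crosses e f \<longleftrightarrow> (case e of (a1,a2) \<Rightarrow> case f of (b1,b2) \<Rightarrow>
      (a1 < b1 \<and> b1 < a2 \<and> a2 < b2) \<or> (b1 < a1 \<and> a1 < b2 \<and> b2 < a2))"

definition adj :: "(nat \<times> nat) set \<Rightarrow> (nat \<times> nat) set" where
  "adj H = H \<union> H\<inverse>"

definition comp :: "nat \<Rightarrow> (nat \<times> nat) set \<Rightarrow> nat \<Rightarrow> nat set" where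
  "comp n H v = {u \<in> {1..n}. (v,u) \<in> (adj H)\<^sup>*}"

definition pi_part :: "nat \<Rightarrow> (nat \<times> nat) set \<Rightarrow> nat set set" where
  "pi_part n H = comp n H ` {1..n}"

definition induced_edges :: "(nat \<times> nat) set \<Rightarrow> nat set \<Rightarrow> (nat \<times> nat) set" where
  "induced_edges E S = {(i,j) \<in> E. i \<in> S \<and> j \<in> S}"

definition is_bond :: "nat \<Rightarrow> (nat \<times> nat) set \<Rightarrow> (nat \<times> nat) set \<Rightarrow> bool" where
  "is_bond n E H \<longleftrightarrow> H \<subseteq> E \<and>
     (\<forall>C \<in> pi_part n H. {(i,j) \<in> H. i \<in> C \<and> j \<in> C} = induced_edges E C)"

definition noncrossing_partition :: "nat set set \<Rightarrow> bool" where
  "noncrossing_partition P \<longleftrightarrow> \<not> (\<exists>B \<in> P. \<exists>B' \<in> P. B \<noteq> B' \<and>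
     (\<exists>a c b d. a \<in> B \<and> c \<in> B \<and> b \<in> B' \<and> d \<in> B' \<and> a < b \<and> b < c \<and> c < d))"

text \<open>NC_G: the noncrossing bonds (as edge sets), ordered by inclusion.\<close>
definition NC :: "nat \<Rightarrow> (nat \<times> nat) set \<Rightarrow> (nat \<times> nat) set set" where
  "NC n E = {H. is_bond n E H \<and> noncrossing_partition (pi_part n H)}"

definition is_join :: "'a set set \<Rightarrow> 'a set \<Rightarrow> 'a set \<Rightarrow> 'a set \<Rightarrow> bool" where
  "is_join S x y z \<longleftrightarrow> z \<in> S \<and> x \<subseteq> z \<and> y \<subseteq> z \<and>
     (\<forall>w \<in> S. x \<subseteq> w \<and> y \<subseteq> w \<longrightarrow> z \<subseteq> w)"

definition induced_connected :: "nat \<Rightarrow> (nat \<times> nat) set \<Rightarrow> nat set \<Rightarrow> bool" where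
  "induced_connected n E S \<longleftrightarrow> S \<subseteq> {1..n} \<and> S \<noteq> {} \<and>
     (\<forall>u \<in> S. \<forall>v \<in> S. (u,v) \<in> (adj (induced_edges E S))\<^sup>*)"

text \<open>Induced connected subgraphs containing both edges e and f (identified with vertex sets).\<close>
definition icc :: "nat \<Rightarrow> (nat \<times> nat) set \<Rightarrow> nat \<times> nat \<Rightarrow> nat \<times> nat \<Rightarrow> nat set set" where
  "icc n E e f = {S. induced_connected n E S \<and>
      fst e \<in> S \<and> snd e \<in> S \<and> fst f \<in> S \<and> snd f \<in> S}"

definition minimal_icc :: "nat \<Rightarrow> (nat \<times> nat) set \<Rightarrow> nat \<times> nat \<Rightarrow> nat \<times> nat \<Rightarrow> nat set \<Rightarrow> bool" where
  "minimal_icc n E e f S \<longleftrightarrow> S \<in> icc n E e f \<and> (\<forall>T \<in> icc n E e f. T \<subseteq> S \<longrightarrow> T = S)"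

definition crossing_closed_pair :: "nat \<Rightarrow> (nat \<times> nat) set \<Rightarrow> nat \<times> nat \<Rightarrow> nat \<times> nat \<Rightarrow> bool" where
  "crossing_closed_pair n E e f \<longleftrightarrow> (\<exists>!S. minimal_icc n E e f S)"

text \<open>J(e,f), as a vertex set; its edge set is induced_edges E (J n E e f).\<close>
definition J :: "nat \<Rightarrow> (nat \<times> nat) set \<Rightarrow> nat \<times> nat \<Rightarrow> nat \<times> nat \<Rightarrow> nat set" where
  "J n E e f = (THE S. minimal_icc n E e f S)"

definition crossing_closed_graph :: "nat \<Rightarrow> (nat \<times> nat) set \<Rightarrow> bool" where
  "crossing_closed_graph n E \<longleftrightarrow>
     (\<forall>e \<in> E. \<forall>f \<in> E. crosses e f \<longrightarrow> crossing_closed_pair n E e f)"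

end

theory Submission
  imports Defs
begin

lemma adj_sym: "(x,y) \<in> (adj H)\<^sup>* \<Longrightarrow> (y,x) \<in> (adj H)\<^sup>*"
proof -
  assume a: "(x,y) \<in> (adj H)\<^sup>*"
  have c: "(adj H)\<inverse> = adj H" by (auto simp: adj_def)
  from rtrancl_converseI[OF a] show ?thesis by (simp add: c)
qed

lemma reach_induced:
  assumes "(v,u) \<in> (adj (induced_edges E S))\<^sup>*"
  shows "u = v \<or> (v \<in> S \<and> u \<in> S)"
  using assms by induction (auto simp: adj_def induced_edges_def)

lemma comp_induced_in:
  assumes "induced_connected n E S" "v \<in> S"
  shows "comp n (induced_edges E S) v = S"
  using assms reach_induced[of v _ E S]
  unfolding comp_def induced_connected_def by blast

lemma comp_induced_out:
  assumes "v \<notin> S" "v \<in> {1..n}"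
  shows "comp n (induced_edges E S) v = {v}"
  using assms reach_induced[of v _ E S]
  unfolding comp_def by auto

lemma pi_part_induced:
  assumes "induced_connected n E S" "C \<in> pi_part n (induced_edges E S)"
  shows "C = S \<or> (\<exists>v. C = {v})"
  using assms comp_induced_in comp_induced_out unfolding pi_part_def by blast

lemma induced_NC:
  assumes g: "graph_on n E" and ic: "induced_connected n E S"
  shows "induced_edges E S \<in> NC n E"
proof -
  have bond: "is_bond n E (induced_edges E S)"
    unfolding is_bond_def
  proof (intro conjI ballI)
    show "induced_edges E S \<subseteq> E" by (auto simp: induced_edges_def)
    fix C assume C: "C \<in> pi_part n (induced_edges E S)"
    from pi_part_induced[OF ic C] show "{(i, j). (i, j) \<in> induced_edges E S \<and> i \<in> C \<and> j \<in> C} =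
         induced_edges E C"
    proof
      assume "C = S" then show ?thesis by (auto simp: induced_edges_def)
    next
      assume "\<exists>v. C = {v}"
      then obtain v where v: "C = {v}" by blast
      have "\<And>i j. (i,j) \<in> E \<Longrightarrow> i < j" using g unfolding graph_on_def by blast
      then show ?thesis using v by (auto simp: induced_edges_def)
    qed
  qed
  have nc: "noncrossing_partition (pi_part n (induced_edges E S))"
    unfolding noncrossing_partition_def
  proof
    assume "\<exists>B\<in>pi_part n (induced_edges E S). \<exists>B'\<in>pi_part n (induced_edges E S). B \<noteq> B' \<and>
          (\<exists>a c b d. a \<in> B \<and> c \<in> B \<and> b \<in> B' \<and> d \<in> B' \<and> a < b \<and> b < c \<and> c < d)"
    then obtain B B' a c b d where B: "B \<in> pi_part n (induced_edges E S)"
      and B': "B' \<in> pi_part n (induced_edges E S)" and ne: "B \<noteq> B'"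
      and x: "a \<in> B" "c \<in> B" "b \<in> B'" "d \<in> B'" "a < b" "b < c" "c < d" by blast
    have "B = S" using pi_part_induced[OF ic B] x by auto
    moreover have "B' = S" using pi_part_induced[OF ic B'] x by auto
    ultimately show False using ne by simp
  qed
  show ?thesis using bond nc by (simp add: NC_def)
qed

lemma comp_connected:
  assumes g: "graph_on n E" and HE: "H \<subseteq> E" and v: "v \<in> {1..n}"
    and r: "(v,u) \<in> (adj H)\<^sup>*"
  shows "(v,u) \<in> (adj {(i,j). (i,j) \<in> H \<and> i \<in> comp n H v \<and> j \<in> comp n H v})\<^sup>*"
  using r
proof (induction rule: rtrancl_induct)
  case base then show ?case by simp
next
  case (step y z)
  have ed: "\<And>i j. (i,j) \<in> H \<Longrightarrow> i \<in> {1..n} \<and> j \<in> {1..n}"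
    using g HE unfolding graph_on_def by auto
  have yz: "y \<in> {1..n}" "z \<in> {1..n}" using step.hyps(2) ed unfolding adj_def by auto
  have "(v,z) \<in> (adj H)\<^sup>*" using step.hyps by auto
  then have "y \<in> comp n H v" "z \<in> comp n H v" using yz step.hyps(1) unfolding comp_def by auto
  then have "(y,z) \<in> adj {(i,j). (i,j) \<in> H \<and> i \<in> comp n H v \<and> j \<in> comp n H v}"
    using step.hyps(2) unfolding adj_def by auto
  then show ?case using step.IH by (meson rtrancl.rtrancl_into_rtrancl)
qed

lemma edge_reach: "(x,y) \<in> H \<Longrightarrow> (x,y) \<in> (adj H)\<^sup>*"
  by (auto simp: adj_def)

lemma ub_comp:
  assumes g: "graph_on n E" and H: "H \<in> NC n E" and e: "(a1,a2) \<in> H" and f: "(b1,b2) \<in> H"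
    and cr: "crosses (a1,a2) (b1,b2)"
  shows "comp n H a1 \<in> icc n E (a1,a2) (b1,b2) \<and> induced_edges E (comp n H a1) \<subseteq> H"
proof -
  have bond: "is_bond n E H" and nc: "noncrossing_partition (pi_part n H)" using H by (auto simp: NC_def)
  have HE: "H \<subseteq> E" using bond by (simp add: is_bond_def)
  have ed: "\<And>i j. (i,j) \<in> H \<Longrightarrow> i \<in> {1..n} \<and> j \<in> {1..n}"
    using g HE unfolding graph_on_def by auto
  define C where "C = comp n H a1"
  define D where "D = comp n H b1"
  have inC: "a1 \<in> C" "a2 \<in> C" using ed[OF e] edge_reach[OF e] unfolding C_def comp_def by auto
  have inD: "b1 \<in> D" "b2 \<in> D" using ed[OF f] edge_reach[OF f] unfolding D_def comp_def by auto
  have CP: "C \<in> pi_part n H" using ed[OF e] unfolding C_def pi_part_def by auto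
  have DP: "D \<in> pi_part n H" using ed[OF f] unfolding D_def pi_part_def by auto
  have CD: "C = D"
  proof (rule ccontr)
    assume ne: "C \<noteq> D"
    from cr have "(a1 < b1 \<and> b1 < a2 \<and> a2 < b2) \<or> (b1 < a1 \<and> a1 < b2 \<and> b2 < a2)"
      by (simp add: crosses_def)
    then show False
    proof
      assume "a1 < b1 \<and> b1 < a2 \<and> a2 < b2"
      then have "\<exists>B \<in> pi_part n H. \<exists>B' \<in> pi_part n H. B \<noteq> B' \<and>
         (\<exists>a c b d. a \<in> B \<and> c \<in> B \<and> b \<in> B' \<and> d \<in> B' \<and> a < b \<and> b < c \<and> c < d)"
        using CP DP ne inC inD by (intro bexI[of _ C] bexI[of _ D]) auto
      then show False using nc unfolding noncrossing_partition_def by blast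
    next
      assume "b1 < a1 \<and> a1 < b2 \<and> b2 < a2"
      then have "\<exists>B \<in> pi_part n H. \<exists>B' \<in> pi_part n H. B \<noteq> B' \<and>
         (\<exists>a c b d. a \<in> B \<and> c \<in> B \<and> b \<in> B' \<and> d \<in> B' \<and> a < b \<and> b < c \<and> c < d)"
        using CP DP ne inC inD by (intro bexI[of _ D] bexI[of _ C]) auto
      then show False using nc unfolding noncrossing_partition_def by blast
    qed
  qed
  have beq: "{(i,j). (i,j) \<in> H \<and> i \<in> C \<and> j \<in> C} = induced_edges E C"
    using bond CP unfolding is_bond_def by blast
  have conn: "\<forall>u\<in>C. \<forall>w\<in>C. (u,w) \<in> (adj (induced_edges E C))\<^sup>*"
  proof (intro ballI)
    fix u w assume u: "u \<in> C" and w: "w \<in> C"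
    have "(a1,u) \<in> (adj H)\<^sup>*" "(a1,w) \<in> (adj H)\<^sup>*" using u w unfolding C_def comp_def by auto
    then have "(a1,u) \<in> (adj (induced_edges E C))\<^sup>*" "(a1,w) \<in> (adj (induced_edges E C))\<^sup>*"
      using comp_connected[OF g HE, of a1] ed[OF e] beq unfolding C_def by auto
    then show "(u,w) \<in> (adj (induced_edges E C))\<^sup>*" using adj_sym by (meson rtrancl_trans)
  qed
  have sub: "C \<subseteq> {1..n}" unfolding C_def comp_def by auto
  have "C \<in> icc n E (a1,a2) (b1,b2)"
    unfolding icc_def induced_connected_def using conn sub inC inD CD by auto
  moreover have "induced_edges E C \<subseteq> H" using beq by auto
  ultimately show ?thesis unfolding C_def by simp
qed

lemma induced_mono_rev:
  assumes ic: "induced_connected n E S" and xy: "x \<in> S" "y \<in> S" "x \<noteq> y"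
    and sub: "induced_edges E S \<subseteq> induced_edges E T"
  shows "S \<subseteq> T"
proof
  fix v assume v: "v \<in> S"
  obtain w where w: "w \<in> S" "w \<noteq> v" using xy by blast
  have "(v,w) \<in> (adj (induced_edges E S))\<^sup>*" using ic v w unfolding induced_connected_def by blast
  then obtain z where "(v,z) \<in> adj (induced_edges E S)" using w(2)
    by (metis converse_rtranclE)
  then have "(v,z) \<in> induced_edges E T \<or> (z,v) \<in> induced_edges E T"
    using sub unfolding adj_def by auto
  then show "v \<in> T" unfolding induced_edges_def by auto
qed

lemma exists_minimal:
  assumes "T \<in> icc n E e f"
  shows "\<exists>S. minimal_icc n E e f S \<and> S \<subseteq> T"
  using assms
proof (induction "card T" arbitrary: T rule: less_induct)
  case less
  show ?case
  proof (cases "minimal_icc n E e f T")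
    case True then show ?thesis by blast
  next
    case False
    then obtain T' where T': "T' \<in> icc n E e f" "T' \<subseteq> T" "T' \<noteq> T"
      using less.prems unfolding minimal_icc_def by blast
    have "T \<subseteq> {1..n}" using less.prems unfolding icc_def induced_connected_def by blast
    then have "finite T" using finite_subset by blast
    then have "card T' < card T" using T' by (meson psubsetI psubset_card_mono)
    from less.hyps[OF this T'(1)] T'(2) show ?thesis by blast
  qed
qed

lemma pair_main:
  assumes g: "graph_on n E" and e: "(a1,a2) \<in> E" and f: "(b1,b2) \<in> E"
    and cr: "crosses (a1,a2) (b1,b2)"
  shows "(crossing_closed_pair n E (a1,a2) (b1,b2) \<longleftrightarrow> (\<exists>z. is_join (NC n E) {(a1,a2)} {(b1,b2)} z)) \<and>
            (crossing_closed_pair n E (a1,a2) (b1,b2) \<longrightarrow>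
               is_join (NC n E) {(a1,a2)} {(b1,b2)} (induced_edges E (J n E (a1,a2) (b1,b2))) \<and>
               {C \<in> pi_part n (induced_edges E (J n E (a1,a2) (b1,b2))). 2 \<le> card C} = {J n E (a1,a2) (b1,b2)})"
proof -
  have a12: "a1 < a2" using g e unfolding graph_on_def by auto
  have in_n: "a1 \<in> {1..n}" using g e unfolding graph_on_def by auto
  let ?e = "(a1,a2)" and ?f = "(b1,b2)"
  have ub: "{?e} \<subseteq> induced_edges E S \<and> {?f} \<subseteq> induced_edges E S" if "S \<in> icc n E ?e ?f" for S
    using that e f unfolding icc_def induced_edges_def by auto
  have A: "is_join (NC n E) {?e} {?f} (induced_edges E (J n E ?e ?f)) \<and>
           {C \<in> pi_part n (induced_edges E (J n E ?e ?f)). 2 \<le> card C} = {J n E ?e ?f}"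
    if cc: "crossing_closed_pair n E ?e ?f"
  proof -
    define S where "S = J n E ?e ?f"
    have ms: "minimal_icc n E ?e ?f S" using cc unfolding S_def J_def crossing_closed_pair_def
      by (rule theI')
    have uniq: "\<And>S'. minimal_icc n E ?e ?f S' \<Longrightarrow> S' = S"
      using cc ms unfolding crossing_closed_pair_def by blast
    have Si: "S \<in> icc n E ?e ?f" using ms unfolding minimal_icc_def by blast
    have ic: "induced_connected n E S" using Si unfolding icc_def by blast
    have j: "is_join (NC n E) {?e} {?f} (induced_edges E S)"
      unfolding is_join_def
    proof (intro conjI ballI impI)
      show "induced_edges E S \<in> NC n E" using induced_NC[OF g ic] .
      show "{?e} \<subseteq> induced_edges E S" "{?f} \<subseteq> induced_edges E S" using ub[OF Si] by auto
      fix w assume w: "w \<in> NC n E" and "{?e} \<subseteq> w \<and> {?f} \<subseteq> w"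
      then have ew: "?e \<in> w" "?f \<in> w" by auto
      from ub_comp[OF g w ew cr] obtain C where C: "C \<in> icc n E ?e ?f" "induced_edges E C \<subseteq> w"
        by blast
      obtain S' where "minimal_icc n E ?e ?f S'" "S' \<subseteq> C" using exists_minimal[OF C(1)] by blast
      then have "S \<subseteq> C" using uniq by blast
      then have "induced_edges E S \<subseteq> induced_edges E C" unfolding induced_edges_def by auto
      then show "induced_edges E S \<subseteq> w" using C(2) by auto
    qed
    have aS: "a1 \<in> S" "a2 \<in> S" using Si unfolding icc_def by auto
    have Sn: "S \<subseteq> {1..n}" using ic unfolding induced_connected_def by blast
    have cardS: "2 \<le> card S"
    proof -
      have "finite S" using Sn by (meson finite_atLeastAtMost finite_subset)
      then have "card {a1,a2} \<le> card S" using aS by (intro card_mono) auto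
      then show ?thesis using a12 by simp
    qed
    have "{C \<in> pi_part n (induced_edges E S). 2 \<le> card C} = {S}"
    proof
      show "{C \<in> pi_part n (induced_edges E S). 2 \<le> card C} \<subseteq> {S}"
        using pi_part_induced[OF ic] by fastforce
      have "S \<in> pi_part n (induced_edges E S)"
        using comp_induced_in[OF ic aS(1)] in_n unfolding pi_part_def by force
      then show "{S} \<subseteq> {C \<in> pi_part n (induced_edges E S). 2 \<le> card C}" using cardS by auto
    qed
    then show ?thesis using j unfolding S_def by simp
  qed
  have B: "crossing_closed_pair n E ?e ?f" if "is_join (NC n E) {?e} {?f} z" for z
  proof -
    have z: "z \<in> NC n E" "?e \<in> z" "?f \<in> z" and least: "\<And>w. w \<in> NC n E \<Longrightarrow> {?e} \<subseteq> w \<Longrightarrow> {?f} \<subseteq> w \<Longrightarrow> z \<subseteq> w"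
      using that unfolding is_join_def by auto
    from ub_comp[OF g z cr] obtain C where C: "C \<in> icc n E ?e ?f" "induced_edges E C \<subseteq> z"
      by blast
    have aC: "a1 \<in> C" "a2 \<in> C" using C(1) unfolding icc_def by auto
    have icC: "induced_connected n E C" using C(1) unfolding icc_def by blast
    obtain S0 where S0: "minimal_icc n E ?e ?f S0" "S0 \<subseteq> C" using exists_minimal[OF C(1)] by blast
    have "S = S0" if mS: "minimal_icc n E ?e ?f S" for S
    proof -
      have Si: "S \<in> icc n E ?e ?f" using mS unfolding minimal_icc_def by blast
      have ic: "induced_connected n E S" using Si unfolding icc_def by blast
      have "z \<subseteq> induced_edges E S" using least[OF induced_NC[OF g ic]] ub[OF Si] by blast
      then have "C \<subseteq> S" using induced_mono_rev[OF icC aC] a12 C(2) by auto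
      then have "S0 \<subseteq> S" using S0 by auto
      then show "S = S0" using mS S0(1) unfolding minimal_icc_def by blast
    qed
    then show ?thesis unfolding crossing_closed_pair_def using S0(1) by blast
  qed
  show ?thesis using A B by blast
qed

theorem theorem2p5:
  fixes n :: nat and E :: "(nat \<times> nat) set"
  assumes "graph_on n E"
  shows "(\<forall>e \<in> E. \<forall>f \<in> E. crosses e f \<longrightarrow>
            (crossing_closed_pair n E e f \<longleftrightarrow> (\<exists>z. is_join (NC n E) {e} {f} z)) \<and>
            (crossing_closed_pair n E e f \<longrightarrow>
               is_join (NC n E) {e} {f} (induced_edges E (J n E e f)) \<and>
               {C \<in> pi_part n (induced_edges E (J n E e f)). 2 \<le> card C} = {J n E e f}))
       \<and> (crossing_closed_graph n E \<longleftrightarrow>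
            (\<forall>e \<in> E. \<forall>f \<in> E. crosses e f \<longrightarrow> (\<exists>z. is_join (NC n E) {e} {f} z)))"
proof -
  have P: "\<forall>e \<in> E. \<forall>f \<in> E. crosses e f \<longrightarrow>
            (crossing_closed_pair n E e f \<longleftrightarrow> (\<exists>z. is_join (NC n E) {e} {f} z)) \<and>
            (crossing_closed_pair n E e f \<longrightarrow>
               is_join (NC n E) {e} {f} (induced_edges E (J n E e f)) \<and>
               {C \<in> pi_part n (induced_edges E (J n E e f)). 2 \<le> card C} = {J n E e f})"
  proof (intro ballI impI)
    fix e f assume "e \<in> E" "f \<in> E" "crosses e f"
    then show "(crossing_closed_pair n E e f \<longleftrightarrow> (\<exists>z. is_join (NC n E) {e} {f} z)) \<and>
            (crossing_closed_pair n E e f \<longrightarrow>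
               is_join (NC n E) {e} {f} (induced_edges E (J n E e f)) \<and>
               {C \<in> pi_part n (induced_edges E (J n E e f)). 2 \<le> card C} = {J n E e f})"
      using pair_main[OF assms] by (cases e; cases f) blast
  qed
  then show ?thesis unfolding crossing_closed_graph_def by blast
qed

end
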